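(* Let $A$ be an observable on $\mathbb C^d$ with orthonormal eigenbasis $\{\varphi_k\}_{k=0}^{d-1}$. For all unit vectors $\Phi,\Psi\in\mathbb C^d$, $$d(T_{A\Phi}\Psi,\Phi)\le 2\,d(\Psi,\Phi).$$
   Context: $\mathcal H=\mathbb C^d$ with the standard inner product; states are unit vectors. An observable $A$ is non-degenerate and identified with its orthonormal eigenbasis $\{\varphi_k\}_{k=0}^{d-1}$. Bures metric: $d(\Phi,\Psi)=\sqrt{2-2|\langle\Phi,\Psi\rangle|}$. Physical imposition operator: $T_{A\Phi}\Psi=\sum_{k=0}^{d-1}|\langle\varphi_k,\Phi\rangle|\,u_k(\Psi)\,\varphi_k$, where $u_k(\Psi)=\langle\varphi_k,\Psi\rangle/|\langle\varphi_k,\Psi\rangle|$ if $\langle\varphi_k,\Psi\rangle\ne0$ and $u_k(\Psi)=1$ otherwise. *)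

theory Defs
  imports "HOL-Analysis.Analysis"
begin

text \<open>The Hilbert space C^d is modelled as complex ^ 'n for a finite index type 'n
  with CARD('n) = d.  Standard inner product, antilinear in the first argument
  (physics convention).\<close>

definition cinner :: "complex ^ 'n \<Rightarrow> complex ^ 'n \<Rightarrow> complex" where
  "cinner x y = (\<Sum>i\<in>UNIV. cnj (x $ i) * y $ i)"

definition bures :: "complex ^ 'n \<Rightarrow> complex ^ 'n \<Rightarrow> real" where
  "bures \<Phi> \<Psi> = sqrt (2 - 2 * cmod (cinner \<Phi> \<Psi>))"

definition orthonormal_basis :: "('n \<Rightarrow> complex ^ 'n) \<Rightarrow> bool" where
  "orthonormal_basis \<phi> \<longleftrightarrow> (\<forall>j k. cinner (\<phi> j) (\<phi> k) = (if j = k then 1 else 0))"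

definition phase :: "complex \<Rightarrow> complex" where
  "phase z = (if z \<noteq> 0 then z / complex_of_real (cmod z) else 1)"

definition imposition :: "('n \<Rightarrow> complex ^ 'n) \<Rightarrow> complex ^ 'n \<Rightarrow> complex ^ 'n \<Rightarrow> complex ^ 'n" where
  "imposition \<phi> \<Phi> \<Psi> =
     (\<Sum>k\<in>UNIV.
        (complex_of_real (cmod (cinner (\<phi> k) \<Phi>)) * phase (cinner (\<phi> k) \<Psi>)) *s \<phi> k)"

end

theory Submission
  imports Defs
begin

lemma cinner_sum_left:
  "cinner (\<Sum>k\<in>UNIV. c k *s (v k :: complex^'n)) w = (\<Sum>k\<in>UNIV. cnj (c k) * cinner (v k) w)"
proof -
  have "cinner (\<Sum>k\<in>UNIV. c k *s (v k :: complex^'n)) w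
      = (\<Sum>i\<in>UNIV. \<Sum>k\<in>UNIV. cnj (c k) * (cnj (v k $ i) * w $ i))"
    unfolding cinner_def by (simp add: sum_component sum_distrib_right mult.assoc)
  also have "\<dots> = (\<Sum>k\<in>UNIV. \<Sum>i\<in>UNIV. cnj (c k) * (cnj (v k $ i) * w $ i))"
    by (rule sum.swap)
  also have "\<dots> = (\<Sum>k\<in>UNIV. cnj (c k) * cinner (v k) w)"
    unfolding cinner_def by (simp add: sum_distrib_left)
  finally show ?thesis .
qed

lemma cinner_scale_right: "cinner v (e *s w) = e * cinner v w"
  unfolding cinner_def by (simp add: sum_distrib_left mult.left_commute)

lemma cinner_scale_left: "cinner (e *s v) w = cnj e * cinner v w"
  unfolding cinner_def by (simp add: sum_distrib_left mult.assoc)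

lemma norm_sq_cinner: "(norm (v::complex^'n))^2 = Re (cinner v v)"
proof -
  have "(norm v)^2 = (\<Sum>i\<in>UNIV. (cmod (v$i))^2)"
    unfolding norm_vec_def L2_set_def by (simp add: sum_nonneg)
  also have "\<dots> = Re (cinner v v)"
    unfolding cinner_def Re_sum by (simp add: cmod_power2 power2_eq_square[symmetric])
  finally show ?thesis .
qed

lemma norm_diff_sq: "(norm ((v::complex^'n) - w))^2 = Re (cinner v v) + Re (cinner w w) - 2 * Re (cinner v w)"
proof -
  have "cinner (v - w) (v - w) = cinner v v + cinner w w - cinner v w - cnj (cinner v w)"
    unfolding cinner_def by (simp add: algebra_simps sum.distrib sum_subtractf)
  then show ?thesis by (simp add: norm_sq_cinner)
qed

lemma parseval:
  assumes "orthonormal_basis \<phi>"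
  shows "(\<Sum>k\<in>UNIV. cnj (cinner (\<phi> k) v) * cinner (\<phi> k) w) = cinner v (w::complex^'n)"
proof -
  define U :: "complex^'n^'n" where "U = (\<chi> i k. \<phi> k $ i)"
  define V :: "complex^'n^'n" where "V = (\<chi> k i. cnj (\<phi> k $ i))"
  have "V ** U = mat 1"
    using assms unfolding orthonormal_basis_def
    by (simp add: U_def V_def matrix_matrix_mult_def mat_def vec_eq_iff cinner_def)
  then have "U ** V = mat 1" using matrix_left_right_inverse by blast
  then have d: "\<And>i j. (\<Sum>k\<in>UNIV. \<phi> k $ i * cnj (\<phi> k $ j)) = (if i = j then 1 else 0)"
    by (simp add: U_def V_def matrix_matrix_mult_def mat_def vec_eq_iff)
  have "(\<Sum>k\<in>UNIV. cnj (cinner (\<phi> k) v) * cinner (\<phi> k) w)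
      = (\<Sum>k\<in>UNIV. \<Sum>i\<in>UNIV. \<Sum>j\<in>UNIV. cnj (v$i) * w$j * (\<phi> k $ i * cnj (\<phi> k $ j)))"
    unfolding cinner_def by (simp add: sum_distrib_left sum_distrib_right ac_simps)
  also have "\<dots> = (\<Sum>i\<in>UNIV. \<Sum>k\<in>UNIV. \<Sum>j\<in>UNIV. cnj (v$i) * w$j * (\<phi> k $ i * cnj (\<phi> k $ j)))"
    by (rule sum.swap)
  also have "\<dots> = (\<Sum>i\<in>UNIV. \<Sum>j\<in>UNIV. \<Sum>k\<in>UNIV. cnj (v$i) * w$j * (\<phi> k $ i * cnj (\<phi> k $ j)))"
    by (rule sum.cong[OF refl], rule sum.swap)
  also have "\<dots> = (\<Sum>i\<in>UNIV. \<Sum>j\<in>UNIV. cnj (v$i) * w$j * (\<Sum>k\<in>UNIV. \<phi> k $ i * cnj (\<phi> k $ j)))"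
    by (simp add: sum_distrib_left)
  also have "\<dots> = cinner v w"
  proof -
    have "(\<Sum>i\<in>UNIV. \<Sum>j\<in>UNIV. cnj (v$i) * w$j * (if i = j then 1 else 0)) = (\<Sum>i\<in>UNIV. \<Sum>j\<in>UNIV. if i = j then cnj (v$i) * w$j else 0)"
      by (rule sum.cong[OF refl], rule sum.cong) auto
    also have "\<dots> = (\<Sum>i\<in>UNIV. cnj (v$i) * w$i)" by simp
    finally show ?thesis unfolding d cinner_def .
  qed
  finally show ?thesis .
qed

lemma phase_cnj_mult: "cnj (phase z) * z = complex_of_real (cmod z)"
proof (cases "z = 0")
  case False
  have "cnj z * z = complex_of_real ((cmod z)^2)" by (simp only: complex_norm_square mult.commute)
  then show ?thesis using False unfolding phase_def
    by (simp add: power2_eq_square field_simps)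
qed (simp add: phase_def)

lemma phase_norm: "cmod (phase z) = 1"
  unfolding phase_def by (simp add: norm_divide)

lemma cnj_phase_phase: "cnj (phase z) * phase z = 1"
proof -
  have "cnj (phase z) * phase z = complex_of_real ((cmod (phase z))^2)"
    by (simp only: complex_norm_square mult.commute)
  then show ?thesis by (simp add: phase_norm)
qed

theorem proposition2:
  fixes \<phi> :: "'n::finite \<Rightarrow> complex ^ 'n" and \<Phi> \<Psi> :: "complex ^ 'n"
  assumes "orthonormal_basis \<phi>"
    and "cinner \<Phi> \<Phi> = 1" and "cinner \<Psi> \<Psi> = 1"
  shows "bures (imposition \<phi> \<Phi> \<Psi>) \<Phi> \<le> 2 * bures \<Psi> \<Phi>"
proof -
  note ob = assms(1)
  define a where "a k = cinner (\<phi> k) \<Phi>" for k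
  define b where "b k = cinner (\<phi> k) \<Psi>" for k
  define X :: "complex^'n" where "X = (\<chi> k. complex_of_real (cmod (a k)) * phase (b k))"
  define Y :: "complex^'n" where "Y = (\<chi> k. b k)"
  define Z :: "complex^'n" where "Z = (\<chi> k. a k)"
  have imp: "imposition \<phi> \<Phi> \<Psi> = (\<Sum>k\<in>UNIV. (X$k) *s \<phi> k)"
    unfolding imposition_def X_def a_def b_def by simp
  have cXZ: "cinner (imposition \<phi> \<Phi> \<Psi>) \<Phi> = cinner X Z"
    unfolding imp cinner_sum_left by (simp add: cinner_def Z_def a_def)
  have cYZ: "cinner \<Psi> \<Phi> = cinner Y Z"
    using parseval[OF ob, of \<Psi> \<Phi>] by (simp add: cinner_def Y_def Z_def a_def b_def)
  have cYY: "cinner Y Y = 1"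
    using parseval[OF ob, of \<Psi> \<Psi>] assms(3) by (simp add: cinner_def Y_def b_def)
  have cZZ: "cinner Z Z = 1"
    using parseval[OF ob, of \<Phi> \<Phi>] assms(2) by (simp add: cinner_def Z_def a_def)
  have "cinner X X = cinner Z Z"
    unfolding cinner_def X_def Z_def
  proof (rule sum.cong[OF refl])
    fix k
    have "cnj ((\<chi> k. complex_of_real (cmod (a k)) * phase (b k)) $ k) *
          (\<chi> k. complex_of_real (cmod (a k)) * phase (b k)) $ k
        = complex_of_real (cmod (a k)) * complex_of_real (cmod (a k)) * (cnj (phase (b k)) * phase (b k))"
      by simp
    also have "\<dots> = complex_of_real ((cmod (a k))^2)"
      by (simp add: cnj_phase_phase power2_eq_square)
    also have "\<dots> = cnj (a k) * a k"
      by (simp only: complex_norm_square mult.commute)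
    finally show "cnj ((\<chi> k. complex_of_real (cmod (a k)) * phase (b k)) $ k) *
          (\<chi> k. complex_of_real (cmod (a k)) * phase (b k)) $ k = cnj ((\<chi> k. a k) $ k) * (\<chi> k. a k) $ k"
      by simp
  qed
  then have cXX: "cinner X X = 1" using cZZ by simp
  define S where "S = (\<Sum>k\<in>UNIV. cmod (a k) * cmod (b k))"
  have cXY: "cinner X Y = complex_of_real S"
    unfolding cinner_def X_def Y_def S_def of_real_sum
  proof (rule sum.cong[OF refl])
    fix k
    show "cnj ((\<chi> k. complex_of_real (cmod (a k)) * phase (b k)) $ k) * (\<chi> k. b k) $ k =
         complex_of_real (cmod (a k) * cmod (b k))"
      using phase_cnj_mult[of "b k"] by (simp add: mult.assoc)
  qed
  define c where "c = cinner Y Z"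
  have cS: "cmod c \<le> S"
  proof -
    have "cmod c \<le> (\<Sum>k\<in>UNIV. cmod (cnj (b k) * a k))"
      unfolding c_def cinner_def Y_def Z_def by (simp add: norm_sum)
    also have "\<dots> = S" unfolding S_def by (simp add: norm_mult mult.commute)
    finally show ?thesis .
  qed
  define e where "e = cnj (phase c)"
  have ec: "e * c = complex_of_real (cmod c)" unfolding e_def by (rule phase_cnj_mult)
  have ee: "cnj e * e = 1" unfolding e_def using cnj_phase_phase[of c] by (simp add: mult.commute)
  have ee': "e * cnj e = 1" using ee by (simp add: mult.commute)
  have ne: "cmod e = 1" unfolding e_def by (simp add: phase_norm)
  define Z' where "Z' = e *s Z"
  have cZ'Z': "cinner Z' Z' = 1" unfolding Z'_def
    by (simp add: cinner_scale_left cinner_scale_right cZZ mult.assoc[symmetric] ee ee')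
  have cYZ': "cinner Y Z' = complex_of_real (cmod c)" unfolding Z'_def
    by (simp add: cinner_scale_right c_def[symmetric] ec)
  have cXZ': "cinner X Z' = e * cinner X Z" unfolding Z'_def by (simp add: cinner_scale_right)
  define D where "D = 2 - 2 * cmod c"
  have nXY: "(norm (X - Y))^2 \<le> D"
    unfolding norm_diff_sq cXX cYY cXY D_def using cS by simp
  have nYZ: "(norm (Y - Z'))^2 = D"
    unfolding norm_diff_sq cYY cZ'Z' cYZ' D_def by simp
  have D0: "D \<ge> 0" using nYZ by (metis zero_le_power2)
  have n1: "norm (X - Y) \<le> sqrt D" using nXY by (simp add: real_le_rsqrt)
  have n2: "norm (Y - Z') = sqrt D" using nYZ by (metis norm_ge_zero real_sqrt_abs real_sqrt_power abs_of_nonneg)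
  have "norm (X - Z') \<le> norm (X - Y) + norm (Y - Z')"
    using norm_triangle_ineq[of "X - Y" "Y - Z'"] by simp
  also have "\<dots> \<le> 2 * sqrt D" using n1 n2 by simp
  finally have n3: "norm (X - Z') \<le> 2 * sqrt D" .
  have "Re (e * cinner X Z) \<le> cmod (e * cinner X Z)" by (rule complex_Re_le_cmod)
  also have "\<dots> = cmod (cinner X Z)" by (simp add: norm_mult ne)
  finally have reb: "Re (e * cinner X Z) \<le> cmod (cinner X Z)" .
  have "2 - 2 * cmod (cinner X Z) \<le> (norm (X - Z'))^2"
    unfolding norm_diff_sq cXX cZ'Z' cXZ' using reb by simp
  also have "\<dots> \<le> (2 * sqrt D)^2"
    using n3 by (intro power_mono) auto
  also have "\<dots> = 4 * D" using D0 by (simp add: power_mult_distrib)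
  finally have key: "2 - 2 * cmod (cinner X Z) \<le> 4 * D" .
  have "bures (imposition \<phi> \<Phi> \<Psi>) \<Phi> = sqrt (2 - 2 * cmod (cinner X Z))"
    unfolding bures_def cXZ ..
  also have "\<dots> \<le> sqrt (4 * D)" using key by simp
  also have "\<dots> = 2 * sqrt D" by (simp add: real_sqrt_mult)
  also have "\<dots> = 2 * bures \<Psi> \<Phi>" unfolding bures_def cYZ D_def c_def ..
  finally show ?thesis .
qed

end
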